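(* Let $d=1$, $I=[-\tfrac12,\tfrac12]$, $f=g=1_I$, $\overline h=2\cdot1_{I^2}$ and $c(x,y)=\tfrac12|x-y|^2$. Then $h:=2\cdot 1_{[-\frac12,0]^2\cup[0,\frac12]^2}$ belongs to $\Gamma(f,g)^{\overline h}$ and minimizes $I_c$ over $\Gamma(f,g)^{\overline h}$. Moreover, with $u(x)=-\tfrac12x^2$, $v(y)=-\tfrac12y^2$, $S=\{(x,y):xy\ge0\}$ and $w=(c+u+v)1_S$ (so $w(x,y)=-xy\,1_{\{xy\ge0\}}$), the triple $(u,v,w)$ satisfies $c+u+v-w\ge0$, $w\le0$, and $\int c\,h=-\int uf-\int vg+\int w\,\overline h$.
   Context: $\Gamma(f,g)^{\overline h}$: nonnegative compactly supported integrable densities $h$ on $\mathbb{R}^2$ with marginals $\int h(x,y)dy=f(x)$, $\int h(x,y)dx=g(y)$ a.e. and $h\le\overline h$ a.e.; $I_c(h):=\int c\,h$. *)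

theory Defs
  imports "HOL-Analysis.Analysis"
begin

definition Gamma_cap ::
  "(real \<Rightarrow> real) \<Rightarrow> (real \<Rightarrow> real) \<Rightarrow> (real \<times> real \<Rightarrow> real) \<Rightarrow> (real \<times> real \<Rightarrow> real) set" where
  "Gamma_cap f g hbar = {h.
      (\<forall>p. 0 \<le> h p)
    \<and> (\<exists>K. compact K \<and> (\<forall>p. p \<notin> K \<longrightarrow> h p = 0))
    \<and> integrable lborel h
    \<and> (AE x in lborel. (LINT y|lborel. h (x, y)) = f x)
    \<and> (AE y in lborel. (LINT x|lborel. h (x, y)) = g y)
    \<and> (AE p in lborel. h p \<le> hbar p)}"

definition I_cost :: "(real \<times> real \<Rightarrow> real) \<Rightarrow> (real \<times> real \<Rightarrow> real) \<Rightarrow> real" where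
  "I_cost c h = (LINT p|lborel. c p * h p)"

end

theory Submission imports Defs begin

lemma int_phi:
  fixes phi :: "real \<times> real \<Rightarrow> real"
  assumes hG: "h \<in> Gamma_cap f g hb" and phic: "continuous_on UNIV phi"
  shows "integrable lborel (\<lambda>p. phi p * h p)"
proof -
  from hG obtain K where K: "compact K" "\<And>p. p \<notin> K \<Longrightarrow> h p = 0"
    and hnn: "\<And>p. 0 \<le> h p" and hint: "integrable lborel h"
    unfolding Gamma_cap_def by blast
  have "bounded (phi ` K)"
    by (rule compact_imp_bounded, rule compact_continuous_image[OF continuous_on_subset[OF phic] K(1)]) auto
  then obtain B where B: "\<And>p. p \<in> K \<Longrightarrow> norm (phi p) \<le> B"
    unfolding bounded_iff by auto
  have i1: "integrable lborel (\<lambda>p. B * h p)" using hint by simp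
  have "phi \<in> borel_measurable lborel"
    using borel_measurable_continuous_onI[OF phic] by simp
  moreover have "h \<in> borel_measurable lborel" using hint by (rule borel_measurable_integrable)
  ultimately have m: "(\<lambda>p. phi p * h p) \<in> borel_measurable lborel" by measurable
  have a: "AE x in lborel. norm (phi x * h x) \<le> norm (B * h x)"
  proof (rule AE_I2)
    fix p show "norm (phi p * h p) \<le> norm (B * h p)"
    proof (cases "p \<in> K")
      case True
      then have "\<bar>phi p\<bar> \<le> B" using B by simp
      then show ?thesis using hnn[of p]
        by (simp add: abs_mult mult_right_mono)
    next
      case False then show ?thesis using K(2) by simp
    qed
  qed
  show ?thesis by (rule Bochner_Integration.integrable_bound[OF i1 m a])
qed

lemma marg_fst:
  assumes hG: "h \<in> Gamma_cap f g hb" and uc: "continuous_on UNIV u"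
    and fm: "f \<in> borel_measurable lborel"
  shows "(LINT p|lborel. u (fst p) * h p) = (LINT x|lborel. u x * f x)"
proof -
  have c: "continuous_on UNIV (\<lambda>p::real\<times>real. u (fst p))"
    by (rule continuous_on_compose2[OF uc]) (auto intro: continuous_intros)
  have i: "integrable lborel (\<lambda>p. u (fst p) * h p)" by (rule int_phi[OF hG c])
  have i2: "integrable (lborel \<Otimes>\<^sub>M lborel) (case_prod (\<lambda>x y. u x * h (x, y)))"
    using i by (simp add: lborel_prod split_beta')
  have "(LINT p|lborel. u (fst p) * h p) = integral\<^sup>L (lborel \<Otimes>\<^sub>M lborel) (\<lambda>(x,y). u x * h (x, y))"
    by (simp add: lborel_prod split_beta')
  also have "\<dots> = (LINT x|lborel. LINT y|lborel. u x * h (x, y))"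
    using lborel_pair.integral_fst[OF i2] by simp
  also have "\<dots> = (LINT x|lborel. u x * f x)"
  proof (rule integral_cong_AE)
    show "(\<lambda>x. LINT y|lborel. u x * h (x, y)) \<in> borel_measurable lborel"
      using lborel_pair.integrable_fst[OF i2] by (rule borel_measurable_integrable)
    show "(\<lambda>x. u x * f x) \<in> borel_measurable lborel"
      using borel_measurable_continuous_onI[OF uc] fm by measurable
    have "AE x in lborel. (LINT y|lborel. h (x, y)) = f x" using hG unfolding Gamma_cap_def by blast
    then show "AE x in lborel. (LINT y|lborel. u x * h (x, y)) = u x * f x"
      by eventually_elim simp
  qed
  finally show ?thesis .
qed

lemma marg_snd:
  assumes hG: "h \<in> Gamma_cap f g hb" and uc: "continuous_on UNIV u"
    and fm: "g \<in> borel_measurable lborel"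
  shows "(LINT p|lborel. u (snd p) * h p) = (LINT x|lborel. u x * g x)"
proof -
  have c: "continuous_on UNIV (\<lambda>p::real\<times>real. u (snd p))"
    by (rule continuous_on_compose2[OF uc]) (auto intro: continuous_intros)
  have i: "integrable lborel (\<lambda>p. u (snd p) * h p)" by (rule int_phi[OF hG c])
  have i2: "integrable (lborel \<Otimes>\<^sub>M lborel) (case_prod (\<lambda>x y. u y * h (x, y)))"
    using i by (simp add: lborel_prod split_beta')
  have "(LINT p|lborel. u (snd p) * h p) = integral\<^sup>L (lborel \<Otimes>\<^sub>M lborel) (\<lambda>(x,y). u y * h (x, y))"
    by (simp add: lborel_prod split_beta')
  also have "\<dots> = (LINT y|lborel. LINT x|lborel. u y * h (x, y))"
    using lborel_pair.integral_snd[OF i2] by simp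
  also have "\<dots> = (LINT x|lborel. u x * g x)"
  proof (rule integral_cong_AE)
    show "(\<lambda>y. LINT x|lborel. u y * h (x, y)) \<in> borel_measurable lborel"
      using lborel_pair.integrable_snd[OF i2] by (rule borel_measurable_integrable)
    show "(\<lambda>x. u x * g x) \<in> borel_measurable lborel"
      using borel_measurable_continuous_onI[OF uc] fm by measurable
    have "AE y in lborel. (LINT x|lborel. h (x, y)) = g y" using hG unfolding Gamma_cap_def by blast
    then show "AE y in lborel. (LINT x|lborel. u y * h (x, y)) = u y * g y"
      by eventually_elim simp
  qed
  finally show ?thesis .
qed


lemma marg_h:
  fixes x :: real
  assumes "x \<noteq> 0"
  shows "(LINT y|lborel. (2::real) * indicator ({-1/2..0} \<times> {-1/2..0} \<union> {0..1/2} \<times> {0..1/2::real}) (x, y))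
     = indicator {-1/2..1/2::real} x"
proof -
  consider "0 < x \<and> x \<le> 1/2" | "-1/2 \<le> x \<and> x < 0" | "x < -1/2 \<or> 1/2 < x" using assms by linarith
  then show ?thesis
  proof cases
    case 1
    then have "(\<lambda>y. (2::real) * indicator ({-1/2..0} \<times> {-1/2..0} \<union> {0..1/2} \<times> {0..1/2::real}) (x, y))
        = (\<lambda>y. 2 * indicator {0..1/2::real} y)"
      by (auto simp: indicator_def fun_eq_iff)
    then show ?thesis using 1 by simp
  next
    case 2
    then have "(\<lambda>y. (2::real) * indicator ({-1/2..0} \<times> {-1/2..0} \<union> {0..1/2} \<times> {0..1/2::real}) (x, y))
        = (\<lambda>y. 2 * indicator {-1/2..0::real} y)"
      by (auto simp: indicator_def fun_eq_iff)
    then show ?thesis using 2 by simp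
  next
    case 3
    then have "(\<lambda>y. (2::real) * indicator ({-1/2..0} \<times> {-1/2..0} \<union> {0..1/2} \<times> {0..1/2::real}) (x, y))
        = (\<lambda>y. 0::real)"
      by (auto simp: indicator_def fun_eq_iff)
    then show ?thesis using 3 by (auto simp: indicator_def)
  qed
qed


theorem mainTheorem13:
  fixes f g :: "real \<Rightarrow> real" and hbar c h w :: "real \<times> real \<Rightarrow> real" and u v :: "real \<Rightarrow> real"
    and S :: "(real \<times> real) set"
  assumes "f = indicator {-1/2..1/2}" and "g = indicator {-1/2..1/2}"
    and "hbar = (\<lambda>p. 2 * indicator ({-1/2..1/2} \<times> {-1/2..1/2}) p)"
    and "c = (\<lambda>(x, y). (1/2) * \<bar>x - y\<bar>^2)"
    and "h = (\<lambda>p. 2 * indicator ({-1/2..0} \<times> {-1/2..0} \<union> {0..1/2} \<times> {0..1/2}) p)"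
    and "u = (\<lambda>x. - (1/2) * x^2)" and "v = (\<lambda>y. - (1/2) * y^2)"
    and "S = {(x, y). x * y \<ge> 0}"
    and "w = (\<lambda>(x, y). (c (x, y) + u x + v y) * indicator S (x, y))"
  shows "h \<in> Gamma_cap f g hbar
    \<and> (\<forall>h' \<in> Gamma_cap f g hbar. I_cost c h \<le> I_cost c h')
    \<and> (\<forall>x y. c (x, y) + u x + v y - w (x, y) \<ge> 0)
    \<and> (\<forall>p. w p \<le> 0)
    \<and> (LINT p|lborel. c p * h p)
        = - (LINT x|lborel. u x * f x) - (LINT y|lborel. v y * g y) + (LINT p|lborel. w p * hbar p)"
proof -
  define A :: "(real \<times> real) set" where "A = {-1/2..0} \<times> {-1/2..0} \<union> {0..1/2} \<times> {0..1/2}"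
  define I :: "real set" where "I = {-1/2..1/2}"
  have cuv: "\<And>x y. c (x, y) + u x + v y = -(x * y)"
    using assms(4,6,7) by (simp add: power2_eq_square algebra_simps)
  have weq: "\<And>p. w p = min 0 (-(fst p * snd p))"
  proof -
    fix p :: "real \<times> real"
    obtain x y where p: "p = (x, y)" by (cases p)
    show "w p = min 0 (-(fst p * snd p))"
      using assms(8,9) p cuv[of x y] by (auto simp: indicator_def)
  qed
  have P3: "\<forall>x y. c (x, y) + u x + v y - w (x, y) \<ge> 0"
    using cuv weq by auto
  have P4: "\<forall>p. w p \<le> 0" using weq by auto
  have ceq: "c = (\<lambda>p. 1/2 * (fst p - snd p)^2)"
    using assms(4) by (auto simp: fun_eq_iff)
  have cc: "continuous_on UNIV c" unfolding ceq by (intro continuous_intros)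
  have uc: "continuous_on UNIV u" unfolding assms(6) by (intro continuous_intros)
  have vc: "continuous_on UNIV v" unfolding assms(7) by (intro continuous_intros)
  have ufc: "continuous_on UNIV (\<lambda>p::real\<times>real. u (fst p))"
    by (rule continuous_on_compose2[OF uc]) (auto intro: continuous_intros)
  have vsc: "continuous_on UNIV (\<lambda>p::real\<times>real. v (snd p))"
    by (rule continuous_on_compose2[OF vc]) (auto intro: continuous_intros)
  have wfun: "w = (\<lambda>p. min 0 (-(fst p * snd p)))" using weq by auto
  have wc: "continuous_on UNIV w" unfolding wfun by (intro continuous_intros)
  have fm: "f \<in> borel_measurable lborel" unfolding assms(1) by simp
  have gm: "g \<in> borel_measurable lborel" unfolding assms(2) by simp
  have hA: "h = (\<lambda>p. 2 * indicator A p)" unfolding assms(5) A_def by simp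
  have Asym: "\<And>x y. indicator A (x, y) = (indicator A (y, x) :: real)"
    unfolding A_def by (auto simp: indicator_def)
  have hG: "h \<in> Gamma_cap f g hbar"
    unfolding Gamma_cap_def
  proof (intro CollectI conjI allI)
    fix p show "0 \<le> h p" unfolding hA by simp
  next
    have "compact A" unfolding A_def by (intro compact_Un compact_Times compact_Icc)
    moreover have "\<forall>p. p \<notin> A \<longrightarrow> h p = 0" unfolding hA by simp
    ultimately show "\<exists>K. compact K \<and> (\<forall>p. p \<notin> K \<longrightarrow> h p = 0)" by blast
  next
    have "compact A" unfolding A_def by (intro compact_Un compact_Times compact_Icc)
    then have "integrable lborel (\<lambda>p. indicator A p *\<^sub>R (2::real))"
      by (rule borel_integrable_compact) (rule continuous_on_const)
    then show "integrable lborel h" unfolding hA by (simp add: mult.commute)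
  next
    show "AE x in lborel. (LINT y|lborel. h (x, y)) = f x"
      using AE_lborel_singleton[of "0::real"]
    proof eventually_elim
      case (elim x)
      then show ?case using marg_h[OF elim] unfolding assms(5) assms(1) by simp
    qed
  next
    show "AE y in lborel. (LINT x|lborel. h (x, y)) = g y"
      using AE_lborel_singleton[of "0::real"]
    proof eventually_elim
      case (elim y)
      have "(LINT x|lborel. h (x, y)) = (LINT x|lborel. h (y, x))"
        unfolding hA using Asym by simp
      then show ?case using marg_h[OF elim] unfolding assms(5) assms(2) by simp
    qed
  next
    show "AE p in lborel. h p \<le> hbar p"
      by (rule AE_I2) (auto simp: assms(3) assms(5) indicator_def)
  qed
  have whi: "integrable lborel (\<lambda>p. w p * hbar p)"
  proof -
    have "compact ({-1/2..1/2::real} \<times> {-1/2..1/2::real})" by (intro compact_Times compact_Icc)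
    then have "integrable lborel (\<lambda>p. indicator ({-1/2..1/2} \<times> {-1/2..1/2::real}) p *\<^sub>R (2 * w p))"
      by (rule borel_integrable_compact) (intro continuous_intros continuous_on_subset[OF wc] subset_UNIV)
    moreover have "(\<lambda>p. w p * hbar p) = (\<lambda>p. indicator ({-1/2..1/2} \<times> {-1/2..1/2::real}) p *\<^sub>R (2 * w p))"
      by (auto simp: assms(3) fun_eq_iff)
    ultimately show ?thesis by simp
  qed
  define D where "D = - (LINT x|lborel. u x * f x) - (LINT y|lborel. v y * g y) + (LINT p|lborel. w p * hbar p)"
  have key: "\<And>p. c p * h p = w p * hbar p - u (fst p) * h p - v (snd p) * h p"
  proof -
    fix p :: "real \<times> real"
    obtain x y where p: "p = (x, y)" by (cases p)
    show "c p * h p = w p * hbar p - u (fst p) * h p - v (snd p) * h p"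
    proof (cases "p \<in> A")
      case True
      then have "x * y \<ge> 0" unfolding A_def p
        by (auto simp: mult_nonpos_nonpos)
      then have "w p = c p + u x + v y" using weq[of p] cuv[of x y] p by simp
      moreover have "hbar p = h p" using True unfolding assms(3) hA A_def p by (auto simp: indicator_def)
      ultimately show ?thesis using p by (simp add: algebra_simps)
    next
      case False
      then have h0: "h p = 0" unfolding hA by simp
      have "w p * hbar p = 0"
      proof (cases "x \<in> I \<and> y \<in> I")
        case True
        with False have "(x > 0 \<and> y < 0) \<or> (x < 0 \<and> y > 0)" unfolding A_def I_def p by auto
        then have "x * y < 0" by (auto simp: mult_pos_neg mult_neg_pos)
        then show ?thesis using weq[of p] p by simp
      next
        case False
        then show ?thesis unfolding assms(3) I_def p by simp
      qed
      then show ?thesis using h0 by simp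
    qed
  qed
  have P5: "(LINT p|lborel. c p * h p) = D"
  proof -
    have i1: "integrable lborel (\<lambda>p. u (fst p) * h p)" by (rule int_phi[OF hG ufc])
    have i2: "integrable lborel (\<lambda>p. v (snd p) * h p)" by (rule int_phi[OF hG vsc])
    have "(LINT p|lborel. c p * h p) = (LINT p|lborel. w p * hbar p - u (fst p) * h p - v (snd p) * h p)"
      using key by simp
    also have "\<dots> = (LINT p|lborel. w p * hbar p) - (LINT p|lborel. u (fst p) * h p) - (LINT p|lborel. v (snd p) * h p)"
      using whi i1 i2 by simp
    also have "\<dots> = D" unfolding D_def marg_fst[OF hG uc fm] marg_snd[OF hG vc gm] by simp
    finally show ?thesis .
  qed
  have P2: "\<forall>h' \<in> Gamma_cap f g hbar. I_cost c h \<le> I_cost c h'"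
  proof
    fix h' assume hG': "h' \<in> Gamma_cap f g hbar"
    have hnn': "\<And>p. 0 \<le> h' p" and hle: "AE p in lborel. h' p \<le> hbar p"
      using hG' unfolding Gamma_cap_def by auto
    define phi where "phi = (\<lambda>p. c p + u (fst p) + v (snd p) - w p)"
    have phic: "continuous_on UNIV phi" unfolding phi_def
      by (intro continuous_on_add continuous_on_diff cc ufc vsc wc)
    have phinn: "\<And>p. phi p \<ge> 0" using P3 unfolding phi_def by (metis prod.collapse)
    have i0: "integrable lborel (\<lambda>p. phi p * h' p)" by (rule int_phi[OF hG' phic])
    have i1: "integrable lborel (\<lambda>p. u (fst p) * h' p)" by (rule int_phi[OF hG' ufc])
    have i2: "integrable lborel (\<lambda>p. v (snd p) * h' p)" by (rule int_phi[OF hG' vsc])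
    have i3: "integrable lborel (\<lambda>p. w p * h' p)" by (rule int_phi[OF hG' wc])
    have "(LINT p|lborel. c p * h' p) = (LINT p|lborel. phi p * h' p - u (fst p) * h' p - v (snd p) * h' p + w p * h' p)"
      unfolding phi_def by (simp add: algebra_simps)
    also have "\<dots> = (LINT p|lborel. phi p * h' p) - (LINT p|lborel. u (fst p) * h' p) - (LINT p|lborel. v (snd p) * h' p) + (LINT p|lborel. w p * h' p)"
      using i0 i1 i2 i3 by simp
    also have "\<dots> = (LINT p|lborel. phi p * h' p) - (LINT x|lborel. u x * f x) - (LINT x|lborel. v x * g x) + (LINT p|lborel. w p * h' p)"
      unfolding marg_fst[OF hG' uc fm] marg_snd[OF hG' vc gm] by simp
    also have "\<dots> \<ge> D"
    proof -
      have "(LINT p|lborel. phi p * h' p) \<ge> 0"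
        by (rule integral_nonneg_AE) (simp add: phinn hnn')
      moreover have "(LINT p|lborel. w p * hbar p) \<le> (LINT p|lborel. w p * h' p)"
      proof (rule integral_mono_AE[OF whi i3])
        show "AE p in lborel. w p * hbar p \<le> w p * h' p"
          using hle by eventually_elim (simp add: P4 mult_left_mono_neg)
      qed
      ultimately show ?thesis unfolding D_def by simp
    qed
    finally have "D \<le> (LINT p|lborel. c p * h' p)" .
    then show "I_cost c h \<le> I_cost c h'" unfolding I_cost_def P5 .
  qed
  show ?thesis using hG P2 P3 P4 P5 unfolding D_def by blast
qed

end
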